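(* Let $K$ be any continuous function on $\mathbb{T}$ satisfying $K(x)\ge1$ for $x\in[-\tfrac14,\tfrac14]$, and let $f$ be a pdf supported on $[-\tfrac14,\tfrac14]$. Then $$\|f*f\|_\infty\ge\|f*f\|_2^2\ge\|\hat K\|_{4/3}^{-4}.$$
   Context: $\mathbb{T}=\mathbb{R}/\mathbb{Z}$; integrals are over $\mathbb{T}$ with Lebesgue measure. For $h\in L^1(\mathbb{T})$ and $j\in\mathbb{Z}$, $\hat h(j)=\int h(x)e^{-2\pi ijx}\,dx$. Convolution $f*g(c)=\int f(x)g(c-x)\,dx$. $\|h\|_p=(\int|h|^p)^{1/p}$, $\|h\|_\infty$ is the essential supremum, and for the coefficient sequence $\|\hat K\|_p=(\sum_{j\in\mathbb{Z}}|\hat K(j)|^p)^{1/p}$. A pdf is a nonnegative function in $L^2(\mathbb{T})$ with integral 1; $[-\tfrac14,\tfrac14]$ is regarded as a subset of $\mathbb{T}$. *)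

theory Defs
  imports "HOL-Analysis.Analysis" "HOL-Probability.Essential_Supremum"
begin

text \<open>Functions on the torus T = R/Z are represented as 1-periodic functions on the reals;
  integrals over T are Lebesgue integrals over the fundamental domain [0,1].\<close>

definition periodic1 :: "(real \<Rightarrow> 'a) \<Rightarrow> bool" where
  "periodic1 h \<longleftrightarrow> (\<forall>x. h (x + 1) = h x)"

definition tconv :: "(real \<Rightarrow> real) \<Rightarrow> (real \<Rightarrow> real) \<Rightarrow> real \<Rightarrow> real" where
  "tconv f g c = (LINT x|lebesgue_on {0..1}. f x * g (c - x))"

definition fourier_coeff :: "(real \<Rightarrow> real) \<Rightarrow> int \<Rightarrow> complex" where
  "fourier_coeff h j =
     (LINT x|lebesgue_on {0..1}. complex_of_real (h x) * exp (- (2 * complex_of_real pi * \<i> * of_int j * complex_of_real x)))"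

definition tLp_norm :: "real \<Rightarrow> (real \<Rightarrow> real) \<Rightarrow> real" where
  "tLp_norm p h = (LINT x|lebesgue_on {0..1}. \<bar>h x\<bar> powr p) powr (1 / p)"

definition tLinf_norm :: "(real \<Rightarrow> real) \<Rightarrow> ereal" where
  "tLinf_norm h = esssup (lebesgue_on {0..1}) (\<lambda>x. ereal \<bar>h x\<bar>)"

text \<open>l^p norm of a coefficient sequence, defined when the sum converges.\<close>
definition lp_summable :: "real \<Rightarrow> (int \<Rightarrow> complex) \<Rightarrow> bool" where
  "lp_summable p c \<longleftrightarrow> (\<lambda>j. norm (c j) powr p) summable_on UNIV"

definition lp_norm :: "real \<Rightarrow> (int \<Rightarrow> complex) \<Rightarrow> real" where
  "lp_norm p c = (\<Sum>\<^sub>\<infinity>j. norm (c j) powr p) powr (1 / p)"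

definition is_pdf :: "(real \<Rightarrow> real) \<Rightarrow> bool" where
  "is_pdf f \<longleftrightarrow> periodic1 f \<and> f \<in> borel_measurable borel
     \<and> (AE x in lebesgue_on {0..1}. f x \<ge> 0)
     \<and> integrable (lebesgue_on {0..1}) (\<lambda>x. (f x)\<^sup>2)
     \<and> (LINT x|lebesgue_on {0..1}. f x) = 1"

text \<open>Supported on [-1/4,1/4] (as a subset of T): vanishes a.e. on (1/4,3/4).\<close>
definition supported_quarter :: "(real \<Rightarrow> real) \<Rightarrow> bool" where
  "supported_quarter f \<longleftrightarrow> (AE x in lebesgue_on {0..1}. x \<in> {1/4<..<3/4} \<longrightarrow> f x = 0)"

end

theory Submission
  imports Defs
begin

definition ee :: "int \<Rightarrow> real \<Rightarrow> complex" where
  "ee j x = exp (2 * complex_of_real pi * \<i> * of_int j * complex_of_real x)"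

definition cc :: "(real \<Rightarrow> complex) \<Rightarrow> int \<Rightarrow> complex" where
  "cc h j = (LINT x|lebesgue_on {0..1}. h x * exp (- (2 * complex_of_real pi * \<i> * of_int j * complex_of_real x)))"

lemma fc_cc: "fourier_coeff g = cc (\<lambda>x. complex_of_real (g x))"
  by (simp add: fourier_coeff_def cc_def fun_eq_iff)

lemma exp_neg_ee: "exp (- (2 * complex_of_real pi * \<i> * of_int j * complex_of_real x)) = ee (-j) x"
  by (simp add: ee_def)

lemma cc_ee: "cc h j = (LINT x|lebesgue_on {0..1}. h x * ee (-j) x)"
  by (simp add: cc_def exp_neg_ee)

lemma ee_mult: "ee j x * ee k x = ee (j+k) x"
  by (simp add: ee_def exp_add[symmetric] algebra_simps)

lemma cnj_ee: "cnj (ee j x) = ee (-j) x"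
  by (simp add: ee_def exp_cnj)

lemma norm_ee[simp]: "norm (ee j x) = 1"
  by (simp add: ee_def norm_exp_eq_Re)

lemma ee_0[simp]: "ee 0 x = 1"
  by (simp add: ee_def)

lemma ee_periodic: "ee j (x + 1) = ee j x"
proof -
  define A where "A = 2 * complex_of_real pi * \<i> * of_int j"
  have "ee j (x+1) = exp (A * complex_of_real x + A)"
    by (simp add: ee_def A_def algebra_simps)
  also have "\<dots> = exp (A * complex_of_real x) * exp A" by (rule exp_add)
  also have "exp A = 1"
    using exp_integer_2pi[of "of_int j"] by (simp add: A_def algebra_simps)
  finally show ?thesis by (simp add: ee_def A_def)
qed

lemma ee_cont[continuous_intros]: "continuous_on S (ee j)"
  unfolding ee_def by (intro continuous_intros)

lemma ee_borel[measurable]: "ee j \<in> borel_measurable borel"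
  by (intro borel_measurable_continuous_onI ee_cont)

lemma finite_M: "finite_measure (lebesgue_on {0..1::real})"
  by (rule finite_measure_lebesgue_on) simp

lemma measure_M[simp]: "measure (lebesgue_on {0..1::real}) {0..1} = 1"
  by (simp add: measure_restrict_space)

lemma int_ee: "(LINT x|lebesgue_on {0..1}. ee m x) = (if m = 0 then 1 else 0)"
proof (cases "m = 0")
  case True then show ?thesis by simp
next
  case False
  define a where "a = 2 * complex_of_real pi * \<i> * of_int m"
  have a0: "a \<noteq> 0" using False by (simp add: a_def)
  have eq: "ee m x = exp (a * complex_of_real x)" for x by (simp add: ee_def a_def)
  have int: "integrable (lebesgue_on {0..1}) (ee m)"
    by (intro continuous_imp_integrable_real ee_cont)
  have d: "((\<lambda>x. exp (a * complex_of_real x) / a) has_vector_derivative ee m x) (at x within {0..1})" for x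
  proof -
    have "((\<lambda>z. exp (a * z) / a) has_field_derivative exp (a * complex_of_real x)) (at (complex_of_real x))"
      by (auto intro!: derivative_eq_intros simp: a0)
    from has_vector_derivative_real_field[OF this] show ?thesis by (simp add: eq)
  qed
  have "(ee m has_integral (exp (a * complex_of_real 1) / a - exp (a * complex_of_real 0) / a)) {0..1}"
    by (rule fundamental_theorem_of_calculus) (auto intro: d)
  moreover have "exp (a * complex_of_real 1) = 1" 
    using exp_integer_2pi[of "of_int m"] by (simp add: a_def algebra_simps)
  ultimately have "(ee m has_integral 0) {0..1}" by simp
  then show ?thesis using False lebesgue_integral_eq_integral[OF int] by (simp add: integral_unique)
qed

lemma LI_int:
  fixes \<phi> :: "real \<Rightarrow> 'a::{banach, second_countable_topology}"
  assumes [measurable]: "\<phi> \<in> borel_measurable borel" and [measurable]: "S \<in> sets borel"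
  shows "integral\<^sup>L (lebesgue_on S) \<phi> = integral\<^sup>L lborel (\<lambda>x. indicator S x *\<^sub>R \<phi> x)"
proof -
  have "S \<inter> space lebesgue \<in> sets lebesgue" by simp
  then have "integral\<^sup>L (lebesgue_on S) \<phi> = integral\<^sup>L lebesgue (\<lambda>x. indicator S x *\<^sub>R \<phi> x)"
    by (rule integral_restrict_space)
  also have "\<dots> = integral\<^sup>L lborel (\<lambda>x. indicator S x *\<^sub>R \<phi> x)"
    by (rule integral_completion) measurable
  finally show ?thesis .
qed

lemma LI_integrable:
  fixes \<phi> :: "real \<Rightarrow> 'a::{banach, second_countable_topology}"
  assumes [measurable]: "\<phi> \<in> borel_measurable borel" and [measurable]: "S \<in> sets borel"
  shows "integrable (lebesgue_on S) \<phi> \<longleftrightarrow> integrable lborel (\<lambda>x. indicator S x *\<^sub>R \<phi> x)"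
proof -
  have "S \<inter> space lebesgue \<in> sets lebesgue" by simp
  then have "integrable (lebesgue_on S) \<phi> \<longleftrightarrow> integrable lebesgue (\<lambda>x. indicator S x *\<^sub>R \<phi> x)"
    by (rule integrable_restrict_space)
  also have "\<dots> \<longleftrightarrow> integrable lborel (\<lambda>x. indicator S x *\<^sub>R \<phi> x)"
    by (rule integrable_completion) measurable
  finally show ?thesis .
qed

lemma periodic_nat: "periodic1 h \<Longrightarrow> h (x + of_nat n) = h x"
proof (induction n arbitrary: x)
  case (Suc n)
  have "h (x + of_nat (Suc n)) = h ((x + of_nat n) + 1)" by (simp add: algebra_simps)
  also have "\<dots> = h (x + of_nat n)" using Suc.prems unfolding periodic1_def by blast
  also have "\<dots> = h x" using Suc.IH Suc.prems by blast
  finally show ?case .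
qed simp

lemma periodic_int: assumes "periodic1 h" shows "h (x + of_int k) = h x"
proof (cases "k \<ge> 0")
  case True
  then obtain n where "k = int n" using nonneg_eq_int by blast
  then show ?thesis using periodic_nat[OF assms, of x n] by simp
next
  case False
  then obtain n where n: "k = - int n" using nonneg_eq_int[of "-k"] by (metis neg_0_le_iff_le le_cases minus_minus)
  have "h (x - of_nat n) = h (x - of_nat n + of_nat n)" using periodic_nat[OF assms, of "x - of_nat n" n] by simp
  then show ?thesis using n by simp
qed

lemma shift_int:
  fixes \<phi> :: "real \<Rightarrow> 'a::{banach, second_countable_topology}"
  assumes [measurable]: "\<phi> \<in> borel_measurable borel" and per: "periodic1 \<phi>"
  shows "integral\<^sup>L lborel (\<lambda>x. indicator {u+ of_int k..<v+ of_int k} x *\<^sub>R \<phi> x)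
           = integral\<^sup>L lborel (\<lambda>x. indicator {u..<v} x *\<^sub>R \<phi> x)"
    and "integrable lborel (\<lambda>x. indicator {u+ of_int k..<v+ of_int k} x *\<^sub>R \<phi> x)
           \<longleftrightarrow> integrable lborel (\<lambda>x. indicator {u..<v} x *\<^sub>R \<phi> x)"
proof -
  have eq: "(\<lambda>x. indicator {u+ of_int k..<v+ of_int k} (of_int k + 1 * x) *\<^sub>R \<phi> (of_int k + 1 * x))
      = (\<lambda>x. indicator {u..<v} x *\<^sub>R \<phi> x)"
    using periodic_int[OF per] by (auto simp: fun_eq_iff indicator_def add.commute)
  show "integral\<^sup>L lborel (\<lambda>x. indicator {u+ of_int k..<v+ of_int k} x *\<^sub>R \<phi> x)
           = integral\<^sup>L lborel (\<lambda>x. indicator {u..<v} x *\<^sub>R \<phi> x)"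
    using lborel_integral_real_affine[of 1 "\<lambda>x. indicator {u+ of_int k..<v+ of_int k} x *\<^sub>R \<phi> x" "of_int k"]
    by (simp only: eq, (simp)?)
  show "integrable lborel (\<lambda>x. indicator {u+ of_int k..<v+ of_int k} x *\<^sub>R \<phi> x)
           \<longleftrightarrow> integrable lborel (\<lambda>x. indicator {u..<v} x *\<^sub>R \<phi> x)"
    using lborel_integrable_real_affine_iff[of 1 "\<lambda>x. indicator {u+ of_int k..<v+ of_int k} x *\<^sub>R \<phi> x" "of_int k"]
    by (simp only: eq, (simp)?)
qed

lemma shift_any:
  fixes \<phi> :: "real \<Rightarrow> 'a::{banach, second_countable_topology}"
  assumes [measurable]: "\<phi> \<in> borel_measurable borel" and per: "periodic1 \<phi>"
    and int: "integrable lborel (\<lambda>x. indicator {0..<1} x *\<^sub>R \<phi> x)"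
  shows "integrable lborel (\<lambda>x. indicator {a..<a+1} x *\<^sub>R \<phi> x)
     \<and> integral\<^sup>L lborel (\<lambda>x. indicator {a..<a+1} x *\<^sub>R \<phi> x) = integral\<^sup>L lborel (\<lambda>x. indicator {0..<1} x *\<^sub>R \<phi> x)"
proof -
  define n where "n = ceiling a"
  define b where "b = a + 1 - of_int n"
  have an: "a \<le> of_int n" "of_int n < a + 1" unfolding n_def by linarith+
  then have b: "0 < b" "b \<le> 1" unfolding b_def by linarith+
  have sub: "integrable lborel (\<lambda>x. indicator {s..<t} x *\<^sub>R \<phi> x)" if "0 \<le> s" "t \<le> 1" for s t
  proof -
    have "integrable lborel (\<lambda>x. indicator {s..<t} x *\<^sub>R (indicator {0..<1} x *\<^sub>R \<phi> x))"
      by (rule integrable_mult_indicator[OF _ int]) simp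
    moreover have "(\<lambda>x. indicator {s..<t} x *\<^sub>R (indicator {0..<1} x *\<^sub>R \<phi> x)) = (\<lambda>x. indicator {s..<t} x *\<^sub>R \<phi> x)"
      using that by (auto simp: fun_eq_iff indicator_def)
    ultimately show ?thesis by simp
  qed
  have e1: "{a..<of_int n} = {b + of_int (n - 1)..<1 + of_int (n-1)}" unfolding b_def by auto
  have e2: "{of_int n..<a+1} = {0 + of_int n..<b + of_int n}" unfolding b_def by auto
  have i1: "integrable lborel (\<lambda>x. indicator {a..<of_int n} x *\<^sub>R \<phi> x)"
    unfolding e1 shift_int(2)[OF assms(1) per] using sub b by simp
  have i2: "integrable lborel (\<lambda>x. indicator {of_int n..<a+1} x *\<^sub>R \<phi> x)"
    unfolding e2 shift_int(2)[OF assms(1) per] using sub b by simp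
  have split: "(\<lambda>x. indicator {a..<a+1} x *\<^sub>R \<phi> x) = (\<lambda>x. indicator {a..<of_int n} x *\<^sub>R \<phi> x + indicator {of_int n..<a+1} x *\<^sub>R \<phi> x)"
    using an by (auto simp: fun_eq_iff indicator_def)
  have split2: "(\<lambda>x. indicator {0..<1} x *\<^sub>R \<phi> x) = (\<lambda>x. indicator {b..<1} x *\<^sub>R \<phi> x + indicator {0..<b} x *\<^sub>R \<phi> x)"
    using b by (auto simp: fun_eq_iff indicator_def)
  have "integral\<^sup>L lborel (\<lambda>x. indicator {a..<a+1} x *\<^sub>R \<phi> x)
     = integral\<^sup>L lborel (\<lambda>x. indicator {a..<of_int n} x *\<^sub>R \<phi> x) + integral\<^sup>L lborel (\<lambda>x. indicator {of_int n..<a+1} x *\<^sub>R \<phi> x)"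
    unfolding split by (rule Bochner_Integration.integral_add[OF i1 i2])
  also have "\<dots> = integral\<^sup>L lborel (\<lambda>x. indicator {b..<1} x *\<^sub>R \<phi> x) + integral\<^sup>L lborel (\<lambda>x. indicator {0..<b} x *\<^sub>R \<phi> x)"
    unfolding e1 e2 shift_int(1)[OF assms(1) per] ..
  also have "\<dots> = integral\<^sup>L lborel (\<lambda>x. indicator {0..<1} x *\<^sub>R \<phi> x)"
    unfolding split2 using sub b by (intro Bochner_Integration.integral_add[symmetric]) auto
  finally show ?thesis using i1 i2 split by simp
qed

lemma ind_closed_open:
  fixes \<phi> :: "real \<Rightarrow> 'a::{banach, second_countable_topology}"
  assumes [measurable]: "\<phi> \<in> borel_measurable borel"
  shows "integral\<^sup>L lborel (\<lambda>x. indicator {a..b} x *\<^sub>R \<phi> x) = integral\<^sup>L lborel (\<lambda>x. indicator {a..<b} x *\<^sub>R \<phi> x)"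
    and "integrable lborel (\<lambda>x. indicator {a..b} x *\<^sub>R \<phi> x) \<longleftrightarrow> integrable lborel (\<lambda>x. indicator {a..<b} x *\<^sub>R \<phi> x)"
proof -
  have ae: "AE x in lborel. indicator {a..b} x *\<^sub>R \<phi> x = indicator {a..<b} x *\<^sub>R \<phi> x"
    using AE_lborel_singleton[of b] by eventually_elim (auto simp: indicator_def)
  show "integral\<^sup>L lborel (\<lambda>x. indicator {a..b} x *\<^sub>R \<phi> x) = integral\<^sup>L lborel (\<lambda>x. indicator {a..<b} x *\<^sub>R \<phi> x)"
    by (rule integral_cong_AE[OF _ _ ae]) measurable
  show "integrable lborel (\<lambda>x. indicator {a..b} x *\<^sub>R \<phi> x) \<longleftrightarrow> integrable lborel (\<lambda>x. indicator {a..<b} x *\<^sub>R \<phi> x)"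
    by (rule integrable_cong_AE[OF _ _ ae]) measurable
qed

lemma reflect_inv:
  fixes \<phi> :: "real \<Rightarrow> 'a::{banach, second_countable_topology}"
  assumes [measurable]: "\<phi> \<in> borel_measurable borel" and per: "periodic1 \<phi>"
    and int: "integrable (lebesgue_on {0..1}) \<phi>"
  shows "integrable (lebesgue_on {0..1}) (\<lambda>x. \<phi> (c - x))"
    and "integral\<^sup>L (lebesgue_on {0..1}) (\<lambda>x. \<phi> (c - x)) = integral\<^sup>L (lebesgue_on {0..1}) \<phi>"
proof -
  have int0: "integrable lborel (\<lambda>x. indicator {0..<1} x *\<^sub>R \<phi> x)"
  proof -
    have "integrable lborel (\<lambda>x. indicator {0..1} x *\<^sub>R \<phi> x)"
      using int LI_integrable[OF assms(1), of "{0..1}"] by simp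
    then show ?thesis using ind_closed_open(2)[OF assms(1)] by blast
  qed
  have eq: "(\<lambda>x. indicator {0..1} (c + (-1) * x) *\<^sub>R \<phi> (c - (c + (-1) * x))) = (\<lambda>x. indicator {c-1..c} x *\<^sub>R \<phi> x)"
    by (auto simp: fun_eq_iff indicator_def)
  have A: "integrable lborel (\<lambda>x. indicator {0..1} x *\<^sub>R \<phi> (c - x)) \<longleftrightarrow> integrable lborel (\<lambda>x. indicator {c-1..c} x *\<^sub>R \<phi> x)"
    using lborel_integrable_real_affine_iff[of "-1" "\<lambda>x. indicator {0..1} x *\<^sub>R \<phi> (c - x)" c]
    by (simp only: eq, (simp)?)
  have B: "integral\<^sup>L lborel (\<lambda>x. indicator {0..1} x *\<^sub>R \<phi> (c - x)) = integral\<^sup>L lborel (\<lambda>x. indicator {c-1..c} x *\<^sub>R \<phi> x)"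
    using lborel_integral_real_affine[of "-1" "\<lambda>x. indicator {0..1} x *\<^sub>R \<phi> (c - x)" c]
    by (simp only: eq, (simp)?)
  have S: "integrable lborel (\<lambda>x. indicator {c-1..<c-1+1} x *\<^sub>R \<phi> x)
     \<and> integral\<^sup>L lborel (\<lambda>x. indicator {c-1..<c-1+1} x *\<^sub>R \<phi> x) = integral\<^sup>L lborel (\<lambda>x. indicator {0..<1} x *\<^sub>R \<phi> x)"
    by (rule shift_any[OF assms(1) per int0])
  have m: "(\<lambda>x. \<phi> (c - x)) \<in> borel_measurable borel" by measurable
  show "integrable (lebesgue_on {0..1}) (\<lambda>x. \<phi> (c - x))"
  proof -
    have "integrable lborel (\<lambda>x. indicator {c-1..c} x *\<^sub>R \<phi> x)"
      using S ind_closed_open(2)[OF assms(1), of "c-1" c] by simp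
    then show ?thesis using A LI_integrable[OF m, of "{0..1}"] by simp
  qed
  show "integral\<^sup>L (lebesgue_on {0..1}) (\<lambda>x. \<phi> (c - x)) = integral\<^sup>L (lebesgue_on {0..1}) \<phi>"
  proof -
    have "integral\<^sup>L lborel (\<lambda>x. indicator {c-1..c} x *\<^sub>R \<phi> x) = integral\<^sup>L lborel (\<lambda>x. indicator {0..1} x *\<^sub>R \<phi> x)"
      using S ind_closed_open(1)[OF assms(1)] by simp
    then show ?thesis using B LI_int[OF m, of "{0..1}"] LI_int[OF assms(1), of "{0..1}"] by simp
  qed
qed

lemma translate_inv:
  fixes \<phi> :: "real \<Rightarrow> 'a::{banach, second_countable_topology}"
  assumes [measurable]: "\<phi> \<in> borel_measurable borel" and per: "periodic1 \<phi>"
    and int: "integrable (lebesgue_on {0..1}) \<phi>"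
  shows "integrable (lebesgue_on {0..1}) (\<lambda>x. \<phi> (x - c))"
    and "integral\<^sup>L (lebesgue_on {0..1}) (\<lambda>x. \<phi> (x - c)) = integral\<^sup>L (lebesgue_on {0..1}) \<phi>"
proof -
  define \<psi> where "\<psi> x = \<phi> (0 - x)" for x
  have m[measurable]: "\<psi> \<in> borel_measurable borel" unfolding \<psi>_def by measurable
  have per': "periodic1 \<psi>" unfolding periodic1_def \<psi>_def
  proof
    fix x :: real
    have "\<phi> ((0 - (x + 1)) + of_int 1) = \<phi> (0 - (x + 1))" by (rule periodic_int[OF per])
    then show "\<phi> (0 - (x + 1)) = \<phi> (0 - x)" by simp
  qed
  have i: "integrable (lebesgue_on {0..1}) \<psi>" unfolding \<psi>_def by (rule reflect_inv(1)[OF assms])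
  have e: "(\<lambda>x. \<phi> (x - c)) = (\<lambda>x. \<psi> (c - x))" by (auto simp: \<psi>_def fun_eq_iff)
  show "integrable (lebesgue_on {0..1}) (\<lambda>x. \<phi> (x - c))"
    unfolding e by (rule reflect_inv(1)[OF m per' i])
  show "integral\<^sup>L (lebesgue_on {0..1}) (\<lambda>x. \<phi> (x - c)) = integral\<^sup>L (lebesgue_on {0..1}) \<phi>"
    unfolding e reflect_inv(2)[OF m per' i] unfolding \<psi>_def by (rule reflect_inv(2)[OF assms])
qed

lemma bm_M: "h \<in> borel_measurable borel \<Longrightarrow> h \<in> borel_measurable (lebesgue_on S)"
  by (intro measurable_restrict_space1 measurable_completion) simp

lemma int_bounded_M:
  fixes h :: "real \<Rightarrow> 'a::{banach, second_countable_topology}"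
  assumes "h \<in> borel_measurable (lebesgue_on {0..1})" "\<And>x. norm (h x) \<le> B"
  shows "integrable (lebesgue_on {0..1}) h"
  using finite_measure.integrable_const_bound[OF finite_M, of h B] assms by simp

lemma prod_bound: "\<bar>a * b\<bar> \<le> ((a::real)\<^sup>2 + b\<^sup>2) / 2"
proof -
  have "0 \<le> (\<bar>a\<bar> - \<bar>b\<bar>)\<^sup>2" by simp
  then show ?thesis by (simp add: power2_eq_square algebra_simps abs_mult)
qed

context
  fixes f :: "real \<Rightarrow> real"
  assumes pdf: "is_pdf f"
begin

lemma f_per: "periodic1 f" using pdf by (simp add: is_pdf_def)
lemma f_borel[measurable]: "f \<in> borel_measurable borel" using pdf by (simp add: is_pdf_def)
lemma f_nonneg: "AE x in lebesgue_on {0..1}. 0 \<le> f x" using pdf by (simp add: is_pdf_def)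
lemma f_sq_int: "integrable (lebesgue_on {0..1}) (\<lambda>x. (f x)\<^sup>2)" using pdf by (simp add: is_pdf_def)
lemma f_int1: "(LINT x|lebesgue_on {0..1}. f x) = 1" using pdf by (simp add: is_pdf_def)
lemma f_M[measurable]: "f \<in> borel_measurable (lebesgue_on {0..1})" by (rule bm_M[OF f_borel])

lemma f_int: "integrable (lebesgue_on {0..1}) f"
proof (rule Bochner_Integration.integrable_bound[OF _ f_M])
  show "integrable (lebesgue_on {0..1}) (\<lambda>x. 1 + (f x)\<^sup>2)"
    using f_sq_int int_bounded_M[of "\<lambda>x. 1::real" 1] by (intro Bochner_Integration.integrable_add) auto
  show "AE x in lebesgue_on {0..1}. norm (f x) \<le> norm (1 + (f x)\<^sup>2)"
  proof (intro AE_I2)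
    fix x
    have "\<bar>f x * 1\<bar> \<le> ((f x)\<^sup>2 + 1\<^sup>2) / 2" by (rule prod_bound)
    then have "\<bar>f x\<bar> \<le> 1 + (f x)\<^sup>2" by simp
    then show "norm (f x) \<le> norm (1 + (f x)\<^sup>2)" by simp
  qed
qed

lemma f_refl_nonneg: "AE x in lebesgue_on {0..1}. 0 \<le> f (c - x)"
proof -
  define \<phi> :: "real \<Rightarrow> real" where "\<phi> y = indicator {y. f y < 0} y" for y
  have m[measurable]: "\<phi> \<in> borel_measurable borel" unfolding \<phi>_def by measurable
  have per: "periodic1 \<phi>" using f_per by (simp add: periodic1_def \<phi>_def indicator_def)
  have mM: "\<phi> \<in> borel_measurable (lebesgue_on {0..1})" by (rule bm_M[OF m])
  have i: "integrable (lebesgue_on {0..1}) \<phi>"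
    by (rule int_bounded_M[OF mM, of 1]) (simp add: \<phi>_def indicator_def)
  have "AE x in lebesgue_on {0..1}. \<phi> x = 0"
    using f_nonneg by eventually_elim (simp add: \<phi>_def)
  then have "integral\<^sup>L (lebesgue_on {0..1}) \<phi> = 0"
    using integral_nonneg_eq_0_iff_AE[OF i] by (simp add: \<phi>_def)
  then have z: "integral\<^sup>L (lebesgue_on {0..1}) (\<lambda>x. \<phi> (c - x)) = 0"
    using reflect_inv(2)[OF m per i] by simp
  have "AE x in lebesgue_on {0..1}. \<phi> (c - x) = 0"
    using integral_nonneg_eq_0_iff_AE[OF reflect_inv(1)[OF m per i, of c]] z
    by (simp add: \<phi>_def)
  then show ?thesis by eventually_elim (auto simp: \<phi>_def indicator_def split: if_splits)
qed

lemma f_refl_sq: "integrable (lebesgue_on {0..1}) (\<lambda>x. (f (c - x))\<^sup>2)"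
   "(LINT x|lebesgue_on {0..1}. (f (c - x))\<^sup>2) = (LINT x|lebesgue_on {0..1}. (f x)\<^sup>2)"
proof -
  have m: "(\<lambda>x. (f x)\<^sup>2) \<in> borel_measurable borel" by measurable
  have per: "periodic1 (\<lambda>x. (f x)\<^sup>2)" using f_per by (simp add: periodic1_def)
  show "integrable (lebesgue_on {0..1}) (\<lambda>x. (f (c - x))\<^sup>2)"
    using reflect_inv(1)[OF m per f_sq_int] by simp
  show "(LINT x|lebesgue_on {0..1}. (f (c - x))\<^sup>2) = (LINT x|lebesgue_on {0..1}. (f x)\<^sup>2)"
    using reflect_inv(2)[OF m per f_sq_int] by simp
qed


lemma prod_int: "integrable (lebesgue_on {0..1}) (\<lambda>x. f x * f (c - x))"
proof (rule Bochner_Integration.integrable_bound)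
  show "integrable (lebesgue_on {0..1}) (\<lambda>x. ((f x)\<^sup>2 + (f (c - x))\<^sup>2) / 2)"
    using f_sq_int f_refl_sq(1) by auto
  show "(\<lambda>x. f x * f (c - x)) \<in> borel_measurable (lebesgue_on {0..1})"
    by (rule bm_M) measurable
  show "AE x in lebesgue_on {0..1}. norm (f x * f (c - x)) \<le> norm (((f x)\<^sup>2 + (f (c - x))\<^sup>2) / 2)"
    using prod_bound by (intro AE_I2) (simp add: abs_of_nonneg)
qed

definition N2 where "N2 = (LINT x|lebesgue_on {0..1}. (f x)\<^sup>2)"

lemma g_nonneg: "0 \<le> tconv f f c"
proof -
  have "AE x in lebesgue_on {0..1}. 0 \<le> f x * f (c - x)"
    using f_nonneg f_refl_nonneg[of c] by eventually_elim (rule mult_nonneg_nonneg)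
  then show ?thesis unfolding tconv_def by (rule integral_nonneg_AE)
qed

lemma g_bound: "\<bar>tconv f f c\<bar> \<le> N2"
proof -
  have "\<bar>tconv f f c\<bar> \<le> (LINT x|lebesgue_on {0..1}. ((f x)\<^sup>2 + (f (c - x))\<^sup>2) / 2)"
    unfolding tconv_def
    using Bochner_Integration.integral_norm_bound_integral[OF prod_int[of c], of "\<lambda>x. ((f x)\<^sup>2 + (f (c - x))\<^sup>2) / 2"]
      f_sq_int f_refl_sq(1) prod_bound by auto
  also have "\<dots> = N2" using f_sq_int f_refl_sq[of c] by (simp add: N2_def)
  finally show ?thesis .
qed

lemma g_borel[measurable]: "tconv f f \<in> borel_measurable borel"
proof -
  have eq: "tconv f f = (\<lambda>c. integral\<^sup>L lborel (\<lambda>x. indicator {0..1} x *\<^sub>R (f x * f (c - x))))"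
  proof
    fix c
    have m: "(\<lambda>x. f x * f (c - x)) \<in> borel_measurable borel" by measurable
    show "tconv f f c = integral\<^sup>L lborel (\<lambda>x. indicator {0..1} x *\<^sub>R (f x * f (c - x)))"
      unfolding tconv_def using LI_int[OF m, of "{0..1}"] by simp
  qed
  show ?thesis unfolding eq
    by (rule lborel.borel_measurable_lebesgue_integral) measurable
qed

end

lemma ee_add: "ee j (a + b) = ee j a * ee j b"
  by (simp add: ee_def exp_add[symmetric] algebra_simps)

context
  fixes f :: "real \<Rightarrow> real"
  assumes pdf: "is_pdf f"
begin

lemma psi_facts:
  fixes j :: int
  defines "\<psi> \<equiv> \<lambda>y. complex_of_real (f y) * ee (-j) y"
  shows "\<psi> \<in> borel_measurable borel" "periodic1 \<psi>" "integrable (lebesgue_on {0..1}) \<psi>"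
    "integral\<^sup>L (lebesgue_on {0..1}) \<psi> = fourier_coeff f j"
proof -
  note f_borel[OF pdf, measurable]
  show m: "\<psi> \<in> borel_measurable borel" unfolding \<psi>_def by measurable
  show "periodic1 \<psi>" using f_per[OF pdf] unfolding periodic1_def \<psi>_def by (simp add: ee_periodic)
  show "integrable (lebesgue_on {0..1}) \<psi>"
  proof (rule Bochner_Integration.integrable_bound[OF f_int[OF pdf]])
    show "\<psi> \<in> borel_measurable (lebesgue_on {0..1})" by (rule bm_M[OF m])
    show "AE x in lebesgue_on {0..1}. norm (\<psi> x) \<le> norm (f x)"
      by (intro AE_I2) (simp add: \<psi>_def norm_mult)
  qed
  show "integral\<^sup>L (lebesgue_on {0..1}) \<psi> = fourier_coeff f j"
    by (simp add: fc_cc cc_ee \<psi>_def)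
qed

lemma step1:
  "integrable (lebesgue_on {0..1}) (\<lambda>c. complex_of_real (f (c - x)) * ee (-j) c)"
  "(LINT c|lebesgue_on {0..1}. complex_of_real (f (c - x)) * ee (-j) c) = fourier_coeff f j * ee (-j) x"
proof -
  define \<psi> where "\<psi> \<equiv> \<lambda>y. complex_of_real (f y) * ee (-j) y"
  note P = psi_facts[of j, folded \<psi>_def]
  have eq: "(\<lambda>c. complex_of_real (f (c - x)) * ee (-j) c) = (\<lambda>c. \<psi> (c - x) * ee (-j) x)"
    by (auto simp: fun_eq_iff \<psi>_def ee_add[symmetric])
  show "integrable (lebesgue_on {0..1}) (\<lambda>c. complex_of_real (f (c - x)) * ee (-j) c)"
    unfolding eq using translate_inv(1)[OF P(1,2,3), of x] by simp
  show "(LINT c|lebesgue_on {0..1}. complex_of_real (f (c - x)) * ee (-j) c) = fourier_coeff f j * ee (-j) x"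
    unfolding eq integral_mult_left_zero translate_inv(2)[OF P(1,2,3)] P(4) ..
qed

lemma g_coeff: "fourier_coeff (tconv f f) j = (fourier_coeff f j)\<^sup>2"
proof -
  note f_borel[OF pdf, measurable] g_borel[OF pdf, measurable]
  define A :: "real set" where "A = {0..1}"
  define H where "H x c = indicator A x *\<^sub>R indicator A c *\<^sub>R (complex_of_real (f x * f (c - x)) * ee (-j) c)" for x c
  have Hm[measurable]: "(\<lambda>(x, c). H x c) \<in> borel_measurable (lborel \<Otimes>\<^sub>M lborel)"
    unfolding H_def A_def by measurable
  have inner: "integral\<^sup>L lborel (\<lambda>c. H x c) = indicator A x *\<^sub>R (complex_of_real (f x) * (fourier_coeff f j * ee (-j) x))"
     and inner_int: "integrable lborel (\<lambda>c. H x c)" for x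
  proof -
    have m: "(\<lambda>c. complex_of_real (f (c - x)) * ee (-j) c) \<in> borel_measurable borel" by measurable
    have e: "(\<lambda>c. H x c) = (\<lambda>c. (indicator A x *\<^sub>R complex_of_real (f x)) * (indicator {0..1} c *\<^sub>R (complex_of_real (f (c - x)) * ee (-j) c)))"
      by (auto simp: fun_eq_iff H_def A_def indicator_def)
    have i: "integrable lborel (\<lambda>c. indicator {0..1} c *\<^sub>R (complex_of_real (f (c - x)) * ee (-j) c))"
      using step1(1)[of x j] LI_integrable[OF m, of "{0..1}"] by simp
    show "integrable lborel (\<lambda>c. H x c)" unfolding e by (rule integrable_mult_right) (rule i)
    show "integral\<^sup>L lborel (\<lambda>c. H x c) = indicator A x *\<^sub>R (complex_of_real (f x) * (fourier_coeff f j * ee (-j) x))"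
      unfolding e integral_mult_right_zero using LI_int[OF m, of "{0..1}"] step1(2)[of x j]
      by (simp add: indicator_def)
  qed
  have Hint: "integrable (lborel \<Otimes>\<^sub>M lborel) (\<lambda>(x, c). H x c)"
  proof (rule lborel_pair.Fubini_integrable)
    show "(\<lambda>(x, c). H x c) \<in> borel_measurable (lborel \<Otimes>\<^sub>M lborel)" by (rule Hm)
    show "AE x in lborel. integrable lborel (\<lambda>c. case (x, c) of (x, c) \<Rightarrow> H x c)"
      using inner_int by simp
    have nrm: "integral\<^sup>L lborel (\<lambda>c. norm (H x c)) = indicator A x * \<bar>f x\<bar> * integral\<^sup>L (lebesgue_on {0..1}) (\<lambda>c. \<bar>f c\<bar>)" for x
    proof -
      have m: "(\<lambda>c. \<bar>f (c - x)\<bar>) \<in> borel_measurable borel" by measurable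
      have m2: "(\<lambda>c. \<bar>f c\<bar>) \<in> borel_measurable borel" by measurable
      have per: "periodic1 (\<lambda>c. \<bar>f c\<bar>)" using f_per[OF pdf] by (simp add: periodic1_def)
      have "(\<lambda>c. norm (H x c)) = (\<lambda>c. (indicator A x * \<bar>f x\<bar>) * (indicator {0..1} c *\<^sub>R \<bar>f (c - x)\<bar>))"
        by (auto simp: fun_eq_iff H_def A_def indicator_def norm_mult abs_mult)
      then have "integral\<^sup>L lborel (\<lambda>c. norm (H x c)) = (indicator A x * \<bar>f x\<bar>) * integral\<^sup>L lborel (\<lambda>c. indicator {0..1} c *\<^sub>R \<bar>f (c - x)\<bar>)"
        by simp
      also have "integral\<^sup>L lborel (\<lambda>c. indicator {0..1} c *\<^sub>R \<bar>f (c - x)\<bar>) = integral\<^sup>L (lebesgue_on {0..1}) (\<lambda>c. \<bar>f (c - x)\<bar>)"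
        using LI_int[OF m, of "{0..1}"] by simp
      also have "\<dots> = integral\<^sup>L (lebesgue_on {0..1}) (\<lambda>c. \<bar>f c\<bar>)"
        by (rule translate_inv(2)[OF m2 per integrable_abs[OF f_int[OF pdf]]])
      finally show ?thesis .
    qed
    have "integrable lborel (\<lambda>x. indicator {0..1} x *\<^sub>R (\<bar>f x\<bar> * integral\<^sup>L (lebesgue_on {0..1}) (\<lambda>c. \<bar>f c\<bar>)))"
    proof -
      have m: "(\<lambda>x. \<bar>f x\<bar> * integral\<^sup>L (lebesgue_on {0..1}) (\<lambda>c. \<bar>f c\<bar>)) \<in> borel_measurable borel" by measurable
      have "integrable (lebesgue_on {0..1}) (\<lambda>x. \<bar>f x\<bar> * integral\<^sup>L (lebesgue_on {0..1}) (\<lambda>c. \<bar>f c\<bar>))"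
        using integrable_abs[OF f_int[OF pdf]] by simp
      then show ?thesis using LI_integrable[OF m, of "{0..1}"] by simp
    qed
    then show "integrable lborel (\<lambda>x. \<integral>c. norm (case (x, c) of (x, c) \<Rightarrow> H x c) \<partial>lborel)"
      by (simp add: nrm A_def mult.assoc)
  qed
  have outer: "indicator A c *\<^sub>R (complex_of_real (tconv f f c) * ee (-j) c) = integral\<^sup>L lborel (\<lambda>x. H x c)" for c
  proof -
    have m: "(\<lambda>x. complex_of_real (f x * f (c - x)) * ee (-j) c) \<in> borel_measurable borel" by measurable
    have "complex_of_real (tconv f f c) * ee (-j) c = (LINT x|lebesgue_on {0..1}. complex_of_real (f x * f (c - x)) * ee (-j) c)"
      unfolding tconv_def integral_mult_left_zero integral_complex_of_real ..
    also have "\<dots> = integral\<^sup>L lborel (\<lambda>x. indicator A x *\<^sub>R (complex_of_real (f x * f (c - x)) * ee (-j) c))"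
      using LI_int[OF m, of "{0..1}"] by (simp add: A_def)
    finally have "indicator A c *\<^sub>R (complex_of_real (tconv f f c) * ee (-j) c) = indicator A c *\<^sub>R integral\<^sup>L lborel (\<lambda>x. indicator A x *\<^sub>R (complex_of_real (f x * f (c - x)) * ee (-j) c))"
      by simp
    also have "\<dots> = integral\<^sup>L lborel (\<lambda>x. indicator A c *\<^sub>R (indicator A x *\<^sub>R (complex_of_real (f x * f (c - x)) * ee (-j) c)))"
      by (rule integral_scaleR_right[symmetric])
    also have "\<dots> = integral\<^sup>L lborel (\<lambda>x. H x c)"
      unfolding H_def by (simp add: scaleR_scaleR mult.commute)
    finally show ?thesis .
  qed
  have "fourier_coeff (tconv f f) j = (LINT c|lebesgue_on {0..1}. complex_of_real (tconv f f c) * ee (-j) c)"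
    by (simp add: fc_cc cc_ee)
  also have "\<dots> = integral\<^sup>L lborel (\<lambda>c. indicator A c *\<^sub>R (complex_of_real (tconv f f c) * ee (-j) c))"
  proof -
    have m: "(\<lambda>c. complex_of_real (tconv f f c) * ee (-j) c) \<in> borel_measurable borel" by measurable
    show ?thesis using LI_int[OF m, of "{0..1}"] by (simp add: A_def)
  qed
  also have "\<dots> = integral\<^sup>L lborel (\<lambda>c. integral\<^sup>L lborel (\<lambda>x. H x c))"
    by (simp add: outer)
  also have "\<dots> = integral\<^sup>L lborel (\<lambda>x. integral\<^sup>L lborel (\<lambda>c. H x c))"
    using lborel_pair.Fubini_integral[of "\<lambda>x c. H x c"] Hint by simp
  also have "\<dots> = integral\<^sup>L lborel (\<lambda>x. indicator A x *\<^sub>R (complex_of_real (f x) * ee (-j) x)) * fourier_coeff f j"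
  proof -
    have "(\<lambda>x. integral\<^sup>L lborel (\<lambda>c. H x c)) = (\<lambda>x. (indicator A x *\<^sub>R (complex_of_real (f x) * ee (-j) x)) * fourier_coeff f j)"
      by (simp add: inner fun_eq_iff scaleR_conv_of_real mult_ac)
    then show ?thesis by (simp only: integral_mult_left_zero)
  qed
  also have "integral\<^sup>L lborel (\<lambda>x. indicator A x *\<^sub>R (complex_of_real (f x) * ee (-j) x)) = fourier_coeff f j"
  proof -
    have m: "(\<lambda>x. complex_of_real (f x) * ee (-j) x) \<in> borel_measurable borel" by measurable
    show ?thesis using LI_int[OF m, of "{0..1}"] by (simp add: A_def fc_cc cc_ee)
  qed
  finally show ?thesis by (simp add: power2_eq_square)
qed

end

lemma ee_M[measurable]: "ee j \<in> borel_measurable (lebesgue_on S)"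
  by (rule bm_M[OF ee_borel])

lemma ee_mult': "ee j x * ee (-k) x = ee (j - k) x"
  using ee_mult[of j x "-k"] by simp

lemma cnj_meas[measurable]: "f \<in> borel_measurable M \<Longrightarrow> (\<lambda>x. cnj (f x)) \<in> borel_measurable M"
  for f :: "'a \<Rightarrow> complex"
  by (rule borel_measurable_continuous_on[where f=cnj]) (auto intro: continuous_intros)

lemma pythag:
  fixes h :: "real \<Rightarrow> complex" and c :: "int \<Rightarrow> complex"
  assumes hm[measurable]: "h \<in> borel_measurable (lebesgue_on {0..1})"
    and hb: "\<And>x. norm (h x) \<le> B" and F: "finite F"
  shows "(LINT x|lebesgue_on {0..1}. (norm (h x - (\<Sum>j\<in>F. c j * ee j x)))\<^sup>2)
       = (LINT x|lebesgue_on {0..1}. (norm (h x))\<^sup>2) - (\<Sum>j\<in>F. (norm (cc h j))\<^sup>2)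
         + (\<Sum>j\<in>F. (norm (c j - cc h j))\<^sup>2)"
proof -
  let ?M = "lebesgue_on {0..1::real}"
  define q where "q x = (\<Sum>j\<in>F. c j * ee j x)" for x
  define C where "C = (\<Sum>j\<in>F. norm (c j))"
  have qm[measurable]: "q \<in> borel_measurable ?M" unfolding q_def by measurable
  have qb: "norm (q x) \<le> C" for x
    unfolding q_def C_def by (rule order_trans[OF norm_sum]) (simp add: norm_mult)
  have B0: "0 \<le> B" using hb[of 0] norm_ge_zero[of "h 0"] by linarith
  have ib: "integrable ?M u" if "u \<in> borel_measurable ?M" "\<And>x. norm (u x) \<le> D" for u :: "real \<Rightarrow> complex" and D
    using int_bounded_M that by blast
  have i_hh: "integrable ?M (\<lambda>x. h x * cnj (h x))"
    by (rule ib[of _ "B*B"], measurable) (auto simp: norm_mult intro!: mult_mono hb B0)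
  have i_hq: "integrable ?M (\<lambda>x. h x * cnj (q x))"
    by (rule ib[of _ "B*C"], measurable) (auto simp: norm_mult intro!: mult_mono hb qb B0)
  have i_qh: "integrable ?M (\<lambda>x. q x * cnj (h x))"
    by (rule ib[of _ "C*B"], measurable) (auto simp: norm_mult intro!: mult_mono hb qb B0 order_trans[OF norm_ge_zero qb])
  have i_qq: "integrable ?M (\<lambda>x. q x * cnj (q x))"
    by (rule ib[of _ "C*C"], measurable) (auto simp: norm_mult intro!: mult_mono qb order_trans[OF norm_ge_zero qb])
  have i_hee: "integrable ?M (\<lambda>x. h x * ee k x)" for k
    by (rule ib[of _ B], measurable) (auto simp: norm_mult hb)
  have i_ee: "integrable ?M (\<lambda>x. a * ee k x)" for k a
    by (rule ib[of _ "norm a"], measurable) (auto simp: norm_mult)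
  have E0: "(LINT x|?M. h x * cnj (h x)) = complex_of_real (LINT x|?M. (norm (h x))\<^sup>2)"
    by (simp only: complex_norm_square[symmetric] integral_complex_of_real)
  have E1: "(LINT x|?M. h x * cnj (q x)) = (\<Sum>j\<in>F. cnj (c j) * cc h j)"
  proof -
    have "(\<lambda>x. h x * cnj (q x)) = (\<lambda>x. \<Sum>j\<in>F. cnj (c j) * (h x * ee (-j) x))"
      by (auto simp: fun_eq_iff q_def sum_distrib_left cnj_ee mult_ac)
    then show ?thesis using i_hee by (simp add: integral_sum cc_ee)
  qed
  have E2: "(LINT x|?M. q x * cnj (h x)) = (\<Sum>j\<in>F. c j * cnj (cc h j))"
  proof -
    have "(\<lambda>x. q x * cnj (h x)) = (\<lambda>x. cnj (h x * cnj (q x)))" by (simp add: fun_eq_iff mult.commute)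
    then have "(LINT x|?M. q x * cnj (h x)) = cnj (LINT x|?M. h x * cnj (q x))"
      by (simp only: Bochner_Integration.integral_cnj)
    then show ?thesis using E1 by (simp add: mult.commute)
  qed
  have E3: "(LINT x|?M. q x * cnj (q x)) = (\<Sum>j\<in>F. c j * cnj (c j))"
  proof -
    have "(\<lambda>x. q x * cnj (q x)) = (\<lambda>x. \<Sum>j\<in>F. \<Sum>k\<in>F. (c j * cnj (c k)) * ee (j + - k) x)"
    proof
      fix x
      have "q x * cnj (q x) = (\<Sum>j\<in>F. c j * ee j x) * (\<Sum>k\<in>F. cnj (c k) * ee (-k) x)"
        by (simp add: q_def cnj_ee)
      also have "\<dots> = (\<Sum>j\<in>F. \<Sum>k\<in>F. (c j * ee j x) * (cnj (c k) * ee (-k) x))"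
        by (rule sum_product)
      also have "\<dots> = (\<Sum>j\<in>F. \<Sum>k\<in>F. (c j * cnj (c k)) * ee (j + - k) x)"
        by (intro sum.cong refl) (simp add: ee_mult'[symmetric] mult_ac)
      finally show "q x * cnj (q x) = (\<Sum>j\<in>F. \<Sum>k\<in>F. (c j * cnj (c k)) * ee (j + - k) x)" .
    qed
    then have "(LINT x|?M. q x * cnj (q x)) = (\<Sum>j\<in>F. \<Sum>k\<in>F. (c j * cnj (c k)) * (LINT x|?M. ee (j + - k) x))"
      using i_ee by (simp add: integral_sum)
    also have "\<dots> = (\<Sum>j\<in>F. \<Sum>k\<in>F. if j = k then c j * cnj (c k) else 0)"
      by (intro sum.cong refl) (auto simp: int_ee)
    also have "\<dots> = (\<Sum>j\<in>F. c j * cnj (c j))"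
      using F by (simp add: sum.delta)
    finally show ?thesis .
  qed
  have "complex_of_real (LINT x|?M. (norm (h x - q x))\<^sup>2) = (LINT x|?M. (h x - q x) * cnj (h x - q x))"
    by (simp only: complex_norm_square[symmetric] integral_complex_of_real)
  also have "\<dots> = (LINT x|?M. h x * cnj (h x) - h x * cnj (q x) - q x * cnj (h x) + q x * cnj (q x))"
    by (simp add: algebra_simps)
  also have "\<dots> = (LINT x|?M. h x * cnj (h x)) - (LINT x|?M. h x * cnj (q x)) - (LINT x|?M. q x * cnj (h x)) + (LINT x|?M. q x * cnj (q x))"
    using i_hh i_hq i_qh i_qq by simp
  also have "\<dots> = complex_of_real (LINT x|?M. (norm (h x))\<^sup>2) - (\<Sum>j\<in>F. cnj (c j) * cc h j) - (\<Sum>j\<in>F. c j * cnj (cc h j)) + (\<Sum>j\<in>F. c j * cnj (c j))"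
    unfolding E0 E1 E2 E3 ..
  also have "\<dots> = complex_of_real ((LINT x|?M. (norm (h x))\<^sup>2) - (\<Sum>j\<in>F. (norm (cc h j))\<^sup>2) + (\<Sum>j\<in>F. (norm (c j - cc h j))\<^sup>2))"
  proof -
    have D: "(\<Sum>j\<in>F. (c j - cc h j) * cnj (c j - cc h j)) = (\<Sum>j\<in>F. c j * cnj (c j)) - (\<Sum>j\<in>F. cnj (c j) * cc h j) - (\<Sum>j\<in>F. c j * cnj (cc h j)) + (\<Sum>j\<in>F. cc h j * cnj (cc h j))"
      by (simp add: sum_subtractf sum.distrib algebra_simps)
    have R: "complex_of_real ((LINT x|?M. (norm (h x))\<^sup>2) - (\<Sum>j\<in>F. (norm (cc h j))\<^sup>2) + (\<Sum>j\<in>F. (norm (c j - cc h j))\<^sup>2))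
      = complex_of_real (LINT x|?M. (norm (h x))\<^sup>2) - (\<Sum>j\<in>F. cc h j * cnj (cc h j)) + (\<Sum>j\<in>F. (c j - cc h j) * cnj (c j - cc h j))"
      by (simp only: of_real_add of_real_diff of_real_sum complex_norm_square)
    show ?thesis unfolding R D by (simp add: algebra_simps)
  qed
  finally show ?thesis unfolding q_def of_real_eq_iff .
qed

definition tp :: "(real \<Rightarrow> complex) \<Rightarrow> bool" where
  "tp q \<longleftrightarrow> (\<exists>F c. finite F \<and> (\<forall>x. q x = (\<Sum>j\<in>F. c j * ee j x)))"

lemma ee_cis: "ee j x = cis (2 * pi * of_int j * x)"
  by (simp add: ee_def cis_conv_exp mult_ac)

lemma sum_restrict_F:
  assumes "finite H" "F \<subseteq> H"
  shows "(\<Sum>j\<in>H. (if j \<in> F then c j else 0) * ee j x) = (\<Sum>j\<in>F. c j * ee j x)"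
proof -
  have "(\<Sum>j\<in>H. (if j \<in> F then c j else 0) * ee j x) = (\<Sum>j\<in>H. if j \<in> F then c j * ee j x else 0)"
    by (intro sum.cong) auto
  also have "\<dots> = (\<Sum>j\<in>H \<inter> F. c j * ee j x)" using assms(1) by (simp add: sum.inter_restrict)
  also have "H \<inter> F = F" using assms(2) by auto
  finally show ?thesis .
qed

lemma tp_add: assumes "tp q1" "tp q2" shows "tp (\<lambda>x. q1 x + q2 x)"
proof -
  obtain F c where F: "finite F" "\<And>x. q1 x = (\<Sum>j\<in>F. c j * ee j x)" using assms(1) unfolding tp_def by blast
  obtain G d where G: "finite G" "\<And>x. q2 x = (\<Sum>j\<in>G. d j * ee j x)" using assms(2) unfolding tp_def by blast
  define e where "e j = (if j \<in> F then c j else 0) + (if j \<in> G then d j else 0)" for j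
  have "q1 x + q2 x = (\<Sum>j\<in>F \<union> G. e j * ee j x)" for x
    unfolding e_def distrib_right sum.distrib F(2) G(2)
    using sum_restrict_F[of "F \<union> G" F c x] sum_restrict_F[of "F \<union> G" G d x] F(1) G(1) by simp
  then show ?thesis unfolding tp_def using F(1) G(1) by blast
qed

lemma tp_mult: assumes "tp q1" "tp q2" shows "tp (\<lambda>x. q1 x * q2 x)"
proof -
  obtain F c where F: "finite F" "\<And>x. q1 x = (\<Sum>j\<in>F. c j * ee j x)" using assms(1) unfolding tp_def by blast
  obtain G d where G: "finite G" "\<And>x. q2 x = (\<Sum>j\<in>G. d j * ee j x)" using assms(2) unfolding tp_def by blast
  define s where "s = (\<lambda>(j, k). j + k :: int)"
  define H where "H = s ` (F \<times> G)"
  define h where "h p = c (fst p) * d (snd p)" for p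
  define e where "e m = (\<Sum>p\<in>{p. p \<in> F \<times> G \<and> s p = m}. h p)" for m
  have fin: "finite (F \<times> G)" "finite H" using F(1) G(1) by (auto simp: H_def)
  have "q1 x * q2 x = (\<Sum>m\<in>H. e m * ee m x)" for x
  proof -
    have "q1 x * q2 x = (\<Sum>j\<in>F. \<Sum>k\<in>G. (c j * ee j x) * (d k * ee k x))"
      unfolding F(2) G(2) by (rule sum_product)
    also have "\<dots> = (\<Sum>p\<in>F \<times> G. h p * ee (s p) x)"
      unfolding sum.cartesian_product by (intro sum.cong refl) (auto simp: h_def s_def ee_mult[symmetric] mult_ac)
    also have "\<dots> = (\<Sum>m\<in>H. \<Sum>p\<in>{p. p \<in> F \<times> G \<and> s p = m}. h p * ee (s p) x)"
      by (rule sum.group[symmetric, OF fin]) (simp add: H_def)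
    also have "\<dots> = (\<Sum>m\<in>H. e m * ee m x)"
      unfolding e_def sum_distrib_right by (intro sum.cong refl) auto
    finally show ?thesis .
  qed
  then show ?thesis unfolding tp_def using fin by blast
qed

lemma tp_const: "tp (\<lambda>x. a)"
  unfolding tp_def by (rule exI[of _ "{0}"], rule exI[of _ "\<lambda>_. a"]) simp

lemma tp_cos: "tp (\<lambda>x. complex_of_real (cos (2 * pi * x)))"
proof -
  have "complex_of_real (cos (2 * pi * x)) = (\<Sum>j\<in>{-1,1}. (1/2) * ee j x)" for x
    by (simp add: ee_cis complex_eq_iff)
  then show ?thesis unfolding tp_def by (intro exI[of _ "{-1,1}"] exI[of _ "\<lambda>_. 1/2"]) simp
qed

lemma tp_sin: "tp (\<lambda>x. complex_of_real (sin (2 * pi * x)))"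
proof -
  have "complex_of_real (sin (2 * pi * x)) = (\<Sum>j\<in>{-1,1}. (if j = 1 then 1 / (2*\<i>) else - 1 / (2*\<i>)) * ee j x)" for x
    by (simp add: ee_cis complex_eq_iff)
  then show ?thesis unfolding tp_def by (intro exI[of _ "{-1,1}"] exI[of _ "\<lambda>j. if j = 1 then 1 / (2*\<i>) else - 1 / (2*\<i>)"]) simp
qed

lemma tp_poly:
  assumes "real_polynomial_function p"
  shows "tp (\<lambda>x. complex_of_real (p (cis (2 * pi * x))))"
  using assms
proof induction
  case (linear f)
  interpret bounded_linear f by fact
  have "f (cis t) = cos t * f 1 + sin t * f \<i>" for t
  proof -
    have "cis t = cos t *\<^sub>R 1 + sin t *\<^sub>R \<i>" by (simp add: complex_eq_iff)
    then show ?thesis by (simp add: add scaleR)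
  qed
  then have eq: "(\<lambda>x. complex_of_real (f (cis (2 * pi * x)))) = (\<lambda>x. complex_of_real (cos (2 * pi * x)) * complex_of_real (f 1) + complex_of_real (sin (2 * pi * x)) * complex_of_real (f \<i>))"
    by (auto simp: fun_eq_iff)
  show ?case unfolding eq by (intro tp_add tp_mult tp_cos tp_sin tp_const)
next
  case (const c) show ?case by (rule tp_const)
next
  case (add f g) then show ?case by (simp add: tp_add)
next
  case (mult f g) then show ?case by (simp add: tp_mult)
qed

lemma cis_Arg_shift: "\<exists>n::int. Arg (cis t) = t + of_int n * 2 * pi"
proof -
  have "cis (Arg (cis t)) = cis t" using cis_Arg[of "cis t"] by simp
  then have "cis (Arg (cis t) - t) = 1" by (simp add: cis_divide[symmetric])
  then have "cos (Arg (cis t) - t) = 1" by (simp add: complex_eq_iff)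
  then obtain n :: int where "Arg (cis t) - t = of_int n * 2 * pi" using cos_one_2pi_int by blast
  then show ?thesis by (intro exI[of _ n]) simp
qed

lemma trig_approx:
  fixes K :: "real \<Rightarrow> real"
  assumes contK: "continuous_on UNIV K" and per: "periodic1 K" and e: "0 < e"
  shows "\<exists>F c. finite F \<and> (\<forall>x. norm (complex_of_real (K x) - (\<Sum>j\<in>F. c j * ee j x)) < e)"
proof -
  define Q where "Q x = cis (2 * pi * x)" for x
  define \<phi> where "\<phi> z = K (Arg z / (2 * pi))" for z
  have phiQ: "\<phi> (Q x) = K x" for x
  proof -
    obtain n :: int where n: "Arg (cis (2 * pi * x)) = 2 * pi * x + of_int n * 2 * pi"
      using cis_Arg_shift by blast
    have "Arg (Q x) / (2 * pi) = x + of_int n" unfolding Q_def n by (simp add: field_simps)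
    then show ?thesis unfolding \<phi>_def using periodic_int[OF per] by simp
  qed
  let ?X = "top_of_set {0..1::real}" and ?Y = "top_of_set (sphere (0::complex) 1)"
  have Qc: "continuous_map ?X ?Y Q"
    unfolding continuous_map_in_subtopology
    by (auto simp: Q_def intro!: continuous_intros)
  have Qsurj: "Q ` topspace ?X = topspace ?Y"
  proof
    show "Q ` topspace ?X \<subseteq> topspace ?Y" by (auto simp: Q_def)
    show "topspace ?Y \<subseteq> Q ` topspace ?X"
    proof
      fix z :: complex assume "z \<in> topspace ?Y"
      then have z: "norm z = 1" by simp
      then have z0: "z \<noteq> 0" by auto
      have zc: "cis (Arg z) = z" using cis_Arg[OF z0] z by (simp add: sgn_div_norm)
      have ab: "- pi < Arg z" "Arg z \<le> pi" using Arg_bounded by auto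
      show "z \<in> Q ` topspace ?X"
      proof (cases "0 \<le> Arg z")
        case True
        then have "Arg z / (2*pi) \<in> {0..1}" using ab by (auto simp: field_simps)
        moreover have "Q (Arg z / (2*pi)) = z" using zc by (simp add: Q_def)
        ultimately show ?thesis by force
      next
        case False
        then have "Arg z / (2*pi) + 1 \<in> {0..1}" using ab by (auto simp: field_simps)
        moreover have "Q (Arg z / (2*pi) + 1) = z"
        proof -
          have "2 * pi * (Arg z / (2*pi) + 1) = Arg z + 2 * pi" by (simp add: field_simps)
          then have "Q (Arg z / (2*pi) + 1) = cis (Arg z + 2 * pi)" by (simp add: Q_def)
          also have "\<dots> = cis (Arg z)" by (simp add: cis_mult[symmetric])
          finally show ?thesis using zc by simp
        qed
        ultimately show ?thesis by force
      qed
    qed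
  qed
  have quot: "quotient_map ?X ?Y Q"
  proof (rule continuous_imp_quotient_map[OF Qc])
    show "compact_space ?X" by (simp add: compact_space_subtopology)
    show "Hausdorff_space ?Y" by (simp add: Hausdorff_space_subtopology)
  qed (rule Qsurj)
  have "continuous_map ?X euclidean (\<phi> \<circ> Q)"
  proof (rule continuous_map_eq)
    show "continuous_map ?X euclidean K" using contK continuous_on_subset by auto
    show "\<And>x. x \<in> topspace ?X \<Longrightarrow> K x = (\<phi> \<circ> Q) x" by (simp add: phiQ)
  qed
  then have "continuous_map ?Y euclidean \<phi>" by (rule continuous_compose_quotient_map[OF quot])
  then have contphi: "continuous_on (sphere 0 1) \<phi>" by simp
  obtain g where g: "polynomial_function g" "\<forall>z\<in>sphere 0 1. norm (\<phi> z - g z) < e"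
    using Stone_Weierstrass_polynomial_function[OF compact_sphere contphi e] by blast
  have "tp (\<lambda>x. complex_of_real (g (cis (2 * pi * x))))"
    by (rule tp_poly) (simp add: g(1) real_polynomial_function_eq)
  then obtain F c where F: "finite F" "\<And>x. complex_of_real (g (cis (2 * pi * x))) = (\<Sum>j\<in>F. c j * ee j x)"
    unfolding tp_def by blast
  have "norm (complex_of_real (K x) - (\<Sum>j\<in>F. c j * ee j x)) < e" for x
  proof -
    have "norm (complex_of_real (K x) - (\<Sum>j\<in>F. c j * ee j x)) = norm (\<phi> (Q x) - g (Q x))"
      unfolding F(2)[symmetric] phiQ by (simp add: Q_def flip: of_real_diff)
    also have "\<dots> < e" using g(2) by (simp add: Q_def)
    finally show ?thesis .
  qed
  then show ?thesis using F(1) by blast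
qed

lemma holder4:
  fixes u v :: "int \<Rightarrow> real"
  assumes F: "finite F" and u0: "\<And>j. 0 \<le> u j" and v0: "\<And>j. 0 \<le> v j"
    and su: "(\<Sum>j\<in>F. u j ^ 4) \<le> G" and sv: "(\<Sum>j\<in>F. v j powr (4/3)) \<le> B"
  shows "(\<Sum>j\<in>F. u j * v j) \<le> G powr (1/4) * B powr (3/4)"
proof (cases "G \<le> 0 \<or> B \<le> 0")
  case True
  then show ?thesis
  proof
    assume G: "G \<le> 0"
    have "(\<Sum>j\<in>F. u j ^ 4) = 0" using su G sum_nonneg[of F "\<lambda>j. u j ^ 4"] by (simp add: u0)
    then have "\<forall>j\<in>F. u j ^ 4 = 0" using F by (subst (asm) sum_nonneg_eq_0_iff) (auto simp: u0)
    then have "(\<Sum>j\<in>F. u j * v j) = 0" by simp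
    then show ?thesis by simp
  next
    assume B: "B \<le> 0"
    have "(\<Sum>j\<in>F. v j powr (4/3)) = 0" using sv B sum_nonneg[of F "\<lambda>j. v j powr (4/3)"] by simp
    then have "\<forall>j\<in>F. v j powr (4/3) = 0" using F by (subst (asm) sum_nonneg_eq_0_iff) auto
    then have "(\<Sum>j\<in>F. u j * v j) = 0" by simp
    then show ?thesis by simp
  qed
next
  case False
  then have G: "0 < G" and B: "0 < B" by auto
  define a where "a = G powr (1/4)"
  define b where "b = B powr (3/4)"
  have a: "0 < a" and b: "0 < b" using G B by (auto simp: a_def b_def)
  have a4: "a powr 4 = G" using G by (simp add: a_def powr_powr)
  have b43: "b powr (4/3) = B" using B by (simp add: b_def powr_powr)
  have trm: "u j * v j \<le> a * b * ((u j ^ 4 / G) / 4 + (v j powr (4/3) / B) / (4/3))" for j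
  proof -
    have "(u j / a) * (v j / b) \<le> (u j / a) powr 4 / 4 + (v j / b) powr (4/3) / (4/3)"
      by (rule Youngs_inequality) (use a b u0 v0 in auto)
    also have "(u j / a) powr 4 = u j ^ 4 / G"
      using u0[of j] a by (simp add: powr_divide a4[symmetric])
    also have "(v j / b) powr (4/3) = v j powr (4/3) / B"
      using v0[of j] b by (simp add: powr_divide b43)
    finally have "(u j / a) * (v j / b) \<le> (u j ^ 4 / G) / 4 + (v j powr (4/3) / B) / (4/3)" .
    then have "a * b * ((u j / a) * (v j / b)) \<le> a * b * ((u j ^ 4 / G) / 4 + (v j powr (4/3) / B) / (4/3))"
      using a b by (intro mult_left_mono) auto
    then show ?thesis using a b by (simp add: field_simps)
  qed
  have "(\<Sum>j\<in>F. u j * v j) \<le> (\<Sum>j\<in>F. a * b * ((u j ^ 4 / G) / 4 + (v j powr (4/3) / B) / (4/3)))"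
    by (rule sum_mono) (rule trm)
  also have "\<dots> = a * b * ((\<Sum>j\<in>F. u j ^ 4) / G / 4 + (\<Sum>j\<in>F. v j powr (4/3)) / B / (4/3))"
    by (simp only: sum_distrib_left[symmetric] sum.distrib sum_divide_distrib[symmetric])
  also have "\<dots> \<le> a * b * (G / G / 4 + B / B / (4/3))"
    using a b G B su sv by (intro mult_left_mono add_mono divide_right_mono) auto
  also have "\<dots> = a * b" using G B by simp
  finally show ?thesis by (simp add: a_def b_def)
qed

lemma fc0: "fourier_coeff h 0 = complex_of_real (LINT x|lebesgue_on {0..1}. h x)"
  by (simp add: fc_cc cc_ee)

lemma g_int1: assumes "is_pdf f" shows "(LINT x|lebesgue_on {0..1}. tconv f f x) = 1"
proof -
  have "complex_of_real (LINT x|lebesgue_on {0..1}. tconv f f x) = (complex_of_real (LINT x|lebesgue_on {0..1}. f x))\<^sup>2"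
    using g_coeff[OF assms, of 0] by (simp add: fc0)
  then show ?thesis using f_int1[OF assms] by simp
qed

lemma K_bounded:
  fixes K :: "real \<Rightarrow> real"
  assumes "continuous_on UNIV K" "periodic1 K"
  obtains BK where "\<And>x. \<bar>K x\<bar> \<le> BK"
proof -
  have "compact (K ` {0..1})" by (rule compact_continuous_image) (use assms(1) continuous_on_subset in auto)
  then obtain BK where BK: "\<And>y. y \<in> K ` {0..1} \<Longrightarrow> norm y \<le> BK"
    using compact_imp_bounded bounded_iff by metis
  have "\<bar>K x\<bar> \<le> BK" for x
  proof -
    have "K x = K ((x - of_int (floor x)) + of_int (floor x))" by simp
    also have "\<dots> = K (x - of_int (floor x))" by (rule periodic_int[OF assms(2)])
    finally have "K x = K (x - of_int (floor x))" .
    moreover have "x - of_int (floor x) \<in> {0..1}"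
      by (auto simp: algebra_simps) linarith
    ultimately show ?thesis using BK by force
  qed
  then show ?thesis using that by blast
qed

lemma bessel:
  fixes h :: "real \<Rightarrow> complex"
  assumes "h \<in> borel_measurable (lebesgue_on {0..1})" "\<And>x. norm (h x) \<le> B" "finite F"
  shows "(\<Sum>j\<in>F. (norm (cc h j))\<^sup>2) \<le> (LINT x|lebesgue_on {0..1}. (norm (h x))\<^sup>2)"
proof -
  have "0 \<le> (LINT x|lebesgue_on {0..1}. (norm (h x - (\<Sum>j\<in>F. cc h j * ee j x)))\<^sup>2)"
    by (intro integral_nonneg_AE) simp
  also have "\<dots> = (LINT x|lebesgue_on {0..1}. (norm (h x))\<^sup>2) - (\<Sum>j\<in>F. (norm (cc h j))\<^sup>2)"
    using pythag[OF assms, of "cc h"] by simp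
  finally show ?thesis by simp
qed

lemma prod_bound_eps: fixes a b e :: real assumes "0 < e" shows "\<bar>a\<bar> * \<bar>b\<bar> \<le> (e * a\<^sup>2 + b\<^sup>2 / e) / 2"
proof -
  have "0 \<le> (e * \<bar>a\<bar> - \<bar>b\<bar>)\<^sup>2" by simp
  then have "2 * e * (\<bar>a\<bar> * \<bar>b\<bar>) \<le> e\<^sup>2 * a\<^sup>2 + b\<^sup>2" by (simp add: power2_eq_square algebra_simps)
  then have "2 * e * (\<bar>a\<bar> * \<bar>b\<bar>) / e \<le> (e\<^sup>2 * a\<^sup>2 + b\<^sup>2) / e"
    using assms by (intro divide_right_mono) auto
  then show ?thesis using assms by (simp add: power2_eq_square field_simps)
qed

lemma int_ge1:
  fixes K f :: "real \<Rightarrow> real"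
  assumes contK: "continuous_on UNIV K" and perK: "periodic1 K"
    and K1: "\<And>x. x \<in> {-1/4..1/4} \<Longrightarrow> K x \<ge> 1"
    and pdf: "is_pdf f" and supp: "supported_quarter f"
  shows "1 \<le> (LINT x|lebesgue_on {0..1}. f x * K x)"
    "integrable (lebesgue_on {0..1}) (\<lambda>x. f x * K x)"
proof -
  obtain BK where BK: "\<And>x. \<bar>K x\<bar> \<le> BK" using K_bounded[OF contK perK] by blast
  have Kb[measurable]: "K \<in> borel_measurable borel" using contK by (rule borel_measurable_continuous_onI)
  note f_borel[OF pdf, measurable]
  show i: "integrable (lebesgue_on {0..1}) (\<lambda>x. f x * K x)"
  proof (rule Bochner_Integration.integrable_bound)
    show "integrable (lebesgue_on {0..1}) (\<lambda>x. BK * f x)" using f_int[OF pdf] by simp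
    show "(\<lambda>x. f x * K x) \<in> borel_measurable (lebesgue_on {0..1})" by (rule bm_M) measurable
    show "AE x in lebesgue_on {0..1}. norm (f x * K x) \<le> norm (BK * f x)"
      using f_nonneg[OF pdf]
    proof eventually_elim
      case (elim x)
      have "\<bar>f x * K x\<bar> = f x * \<bar>K x\<bar>" using elim by (simp add: abs_mult)
      also have "\<dots> \<le> f x * BK" using elim BK by (intro mult_left_mono) auto
      also have "\<dots> \<le> \<bar>BK * f x\<bar>" by (simp add: mult.commute)
      finally show ?case by simp
    qed
  qed
  have ae: "AE x in lebesgue_on {0..1}. f x \<le> f x * K x"
  proof -
    have "AE x in lebesgue_on {0..1}. 0 \<le> f x \<and> (x \<in> {1/4<..<3/4} \<longrightarrow> f x = 0)"
      using f_nonneg[OF pdf] supp unfolding supported_quarter_def by eventually_elim auto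
    then show ?thesis
    proof (rule lebesgue_on_mono)
      fix x :: real assume h: "0 \<le> f x \<and> (x \<in> {1/4<..<3/4} \<longrightarrow> f x = 0)" and x: "x \<in> {0..1}"
      consider "x \<le> 1/4" | "x \<in> {1/4<..<3/4}" | "3/4 \<le> x" by fastforce
      then show "f x \<le> f x * K x"
      proof cases
        case 1
        then have "1 \<le> K x" using K1 x by auto
        then show ?thesis using h mult_left_mono[of 1 "K x" "f x"] by simp
      next
        case 2 then show ?thesis using h by simp
      next
        case 3
        have "K x = K ((x - 1) + of_int 1)" by simp
        also have "\<dots> = K (x - 1)" by (rule periodic_int[OF perK])
        finally have "1 \<le> K x" using K1[of "x - 1"] x 3 by auto
        then show ?thesis using h mult_left_mono[of 1 "K x" "f x"] by simp
      qed
    qed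
  qed
  have "1 = (LINT x|lebesgue_on {0..1}. f x)" using f_int1[OF pdf] by simp
  also have "\<dots> \<le> (LINT x|lebesgue_on {0..1}. f x * K x)"
    by (rule integral_mono_AE[OF f_int[OF pdf] i ae])
  finally show "1 \<le> (LINT x|lebesgue_on {0..1}. f x * K x)" .
qed

lemma eps_step:
  fixes K f :: "real \<Rightarrow> real"
  assumes contK: "continuous_on UNIV K" and perK: "periodic1 K"
    and pdf: "is_pdf f"
    and summ: "lp_summable (4/3) (fourier_coeff K)"
    and e: "0 < e"
  shows "(LINT x|lebesgue_on {0..1}. f x * K x)
     \<le> (LINT x|lebesgue_on {0..1}. (tconv f f x)\<^sup>2) powr (1/4)
        * (infsum (\<lambda>j. norm (fourier_coeff K j) powr (4/3)) UNIV) powr (3/4)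
       + e * (N2 f + 1) / 2"
proof -
  let ?M = "lebesgue_on {0..1::real}"
  define g where "g = tconv f f"
  define G where "G = (LINT x|?M. (g x)\<^sup>2)"
  define Btot where "Btot = infsum (\<lambda>j. norm (fourier_coeff K j) powr (4/3)) UNIV"
  define Kh where "Kh = fourier_coeff K"
  define fh where "fh = fourier_coeff f"
  define hK where "hK x = complex_of_real (K x)" for x
  obtain BK where BK: "\<And>x. \<bar>K x\<bar> \<le> BK" using K_bounded[OF contK perK] by blast
  have Kb[measurable]: "K \<in> borel_measurable borel" using contK by (rule borel_measurable_continuous_onI)
  note f_borel[OF pdf, measurable] g_borel[OF pdf, measurable] f_M[OF pdf, measurable]
  have hKm[measurable]: "hK \<in> borel_measurable ?M" unfolding hK_def by (rule bm_M) measurable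
  have hKb: "norm (hK x) \<le> BK" for x using BK by (simp add: hK_def)
  have Khc: "Kh = cc hK" unfolding Kh_def fc_cc by (simp add: hK_def[abs_def])
  obtain F c where F: "finite F" and Fc: "\<And>x. norm (complex_of_real (K x) - (\<Sum>j\<in>F. c j * ee j x)) < e"
    using trig_approx[OF contK perK e] by blast
  define P where "P x = (\<Sum>j\<in>F. Kh j * ee j x)" for x
  define CP where "CP = (\<Sum>j\<in>F. norm (Kh j))"
  have Pm[measurable]: "P \<in> borel_measurable ?M" unfolding P_def by measurable
  have Pb: "norm (P x) \<le> CP" for x
    unfolding P_def CP_def by (rule order_trans[OF norm_sum]) (simp add: norm_mult)
  have BKCP: "0 \<le> BK + CP"
  proof -
    have "0 \<le> BK" using BK[of 0] by linarith
    moreover have "0 \<le> CP" unfolding CP_def by (simp add: sum_nonneg)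
    ultimately show ?thesis by simp
  qed
  define D where "D = (LINT x|?M. (norm (hK x - P x))\<^sup>2)"
  have D_le: "D \<le> e\<^sup>2"
  proof -
    have "D = (LINT x|?M. (norm (hK x))\<^sup>2) - (\<Sum>j\<in>F. (norm (cc hK j))\<^sup>2)"
      unfolding D_def P_def Khc using pythag[OF hKm hKb F, of "cc hK"] by simp
    also have "\<dots> \<le> (LINT x|?M. (norm (hK x - (\<Sum>j\<in>F. c j * ee j x)))\<^sup>2)"
      using pythag[OF hKm hKb F, of c] by (simp add: sum_nonneg)
    also have "\<dots> \<le> (LINT x|?M. e\<^sup>2)"
    proof (rule integral_mono)
      show "integrable ?M (\<lambda>x. (norm (hK x - (\<Sum>j\<in>F. c j * ee j x)))\<^sup>2)"
      proof (rule int_bounded_M)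
        show "(\<lambda>x. (norm (hK x - (\<Sum>j\<in>F. c j * ee j x)))\<^sup>2) \<in> borel_measurable ?M" by measurable
        show "norm ((norm (hK x - (\<Sum>j\<in>F. c j * ee j x)))\<^sup>2) \<le> e\<^sup>2" for x
          using Fc[of x] by (simp add: hK_def power_mono)
      qed
      show "integrable ?M (\<lambda>x. e\<^sup>2)" by (rule int_bounded_M[of _ "e\<^sup>2"]) auto
      show "(norm (hK x - (\<Sum>j\<in>F. c j * ee j x)))\<^sup>2 \<le> e\<^sup>2" for x
        using Fc[of x] by (simp add: hK_def power_mono)
    qed
    also have "\<dots> = e\<^sup>2" by simp
    finally show ?thesis .
  qed
  have ifee: "integrable ?M (\<lambda>x. complex_of_real (f x) * ee k x)" for k
  proof (rule Bochner_Integration.integrable_bound[OF f_int[OF pdf]])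
    show "(\<lambda>x. complex_of_real (f x) * ee k x) \<in> borel_measurable ?M" by (rule bm_M) measurable
    show "AE x in ?M. norm (complex_of_real (f x) * ee k x) \<le> norm (f x)" by (intro AE_I2) (simp add: norm_mult)
  qed
  have T1: "(LINT x|?M. complex_of_real (f x) * P x) = (\<Sum>j\<in>F. Kh j * fh (-j))"
  proof -
    have "(\<lambda>x. complex_of_real (f x) * P x) = (\<lambda>x. \<Sum>j\<in>F. Kh j * (complex_of_real (f x) * ee j x))"
      by (auto simp: fun_eq_iff P_def sum_distrib_left mult_ac)
    then show ?thesis using ifee by (simp add: integral_sum fh_def fc_cc cc_ee)
  qed
  have T2: "norm (LINT x|?M. complex_of_real (f x) * (hK x - P x)) \<le> (e * N2 f + e) / 2"
  proof -
    have i1: "integrable ?M (\<lambda>x. norm (complex_of_real (f x) * (hK x - P x)))"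
    proof (rule Bochner_Integration.integrable_bound)
      show "integrable ?M (\<lambda>x. (BK + CP) * f x)" using f_int[OF pdf] by simp
      show "(\<lambda>x. norm (complex_of_real (f x) * (hK x - P x))) \<in> borel_measurable ?M" by measurable
      show "AE x in ?M. norm (norm (complex_of_real (f x) * (hK x - P x))) \<le> norm ((BK + CP) * f x)"
      proof (intro AE_I2)
        fix x
        have "norm (hK x - P x) \<le> BK + CP" using hKb[of x] Pb[of x] norm_triangle_ineq4[of "hK x" "P x"] by linarith
        then have "\<bar>f x\<bar> * norm (hK x - P x) \<le> \<bar>f x\<bar> * (BK + CP)" by (intro mult_left_mono) auto
        then show "norm (norm (complex_of_real (f x) * (hK x - P x))) \<le> norm ((BK + CP) * f x)"
          using BKCP by (simp add: norm_mult abs_mult mult.commute)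
      qed
    qed
    have idd: "integrable ?M (\<lambda>x. (norm (hK x - P x))\<^sup>2)"
      proof (rule int_bounded_M)
        show "(\<lambda>x. (norm (hK x - P x))\<^sup>2) \<in> borel_measurable ?M" by measurable
        show "norm ((norm (hK x - P x))\<^sup>2) \<le> (BK + CP)\<^sup>2" for x
        proof -
          have "norm (hK x - P x) \<le> BK + CP" using hKb[of x] Pb[of x] norm_triangle_ineq4[of "hK x" "P x"] by linarith
          then show ?thesis by (simp add: power_mono)
        qed
      qed
    have i2: "integrable ?M (\<lambda>x. (e * (f x)\<^sup>2 + (norm (hK x - P x))\<^sup>2 / e) / 2)"
      using idd f_sq_int[OF pdf] by simp
    have "norm (LINT x|?M. complex_of_real (f x) * (hK x - P x)) \<le> (LINT x|?M. norm (complex_of_real (f x) * (hK x - P x)))"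
      by (rule Bochner_Integration.integral_norm_bound)
    also have "\<dots> \<le> (LINT x|?M. (e * (f x)\<^sup>2 + (norm (hK x - P x))\<^sup>2 / e) / 2)"
    proof (rule integral_mono[OF i1 i2])
      fix x
      have "\<bar>f x\<bar> * \<bar>norm (hK x - P x)\<bar> \<le> (e * (f x)\<^sup>2 + (norm (hK x - P x))\<^sup>2 / e) / 2"
        by (rule prod_bound_eps[OF e])
      then show "norm (complex_of_real (f x) * (hK x - P x)) \<le> (e * (f x)\<^sup>2 + (norm (hK x - P x))\<^sup>2 / e) / 2"
        by (simp add: norm_mult)
    qed
    also have "\<dots> = (e * N2 f + D / e) / 2"
      using f_sq_int[OF pdf] idd unfolding D_def N2_def[OF pdf] by simp
    also have "\<dots> \<le> (e * N2 f + e) / 2"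
    proof -
      have "D / e \<le> e\<^sup>2 / e" using D_le e by (intro divide_right_mono) auto
      also have "e\<^sup>2 / e = e" using e by (simp add: power2_eq_square)
      finally show ?thesis by (intro divide_right_mono add_left_mono) auto
    qed
    finally show ?thesis .
  qed
  have H: "(\<Sum>j\<in>F. norm (fh (-j)) * norm (Kh j)) \<le> G powr (1/4) * Btot powr (3/4)"
  proof (rule holder4[OF F])
    show "(\<Sum>j\<in>F. norm (fh (-j)) ^ 4) \<le> G"
    proof -
      define hg where "hg x = complex_of_real (g x)" for x
      have hgm: "hg \<in> borel_measurable ?M" unfolding hg_def g_def by (rule bm_M) measurable
      have hgb: "norm (hg x) \<le> N2 f" for x using g_bound[OF pdf] by (simp add: hg_def g_def)
      have "(\<Sum>j\<in>F. norm (fh (-j)) ^ 4) = (\<Sum>j\<in>F. (norm (cc hg (-j)))\<^sup>2)"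
      proof (intro sum.cong refl)
        fix j
        have "cc hg (-j) = (fh (-j))\<^sup>2" using g_coeff[OF pdf, of "-j"] by (simp add: hg_def[abs_def] g_def fh_def fc_cc)
        then show "norm (fh (-j)) ^ 4 = (norm (cc hg (-j)))\<^sup>2" by (simp add: norm_power power_mult[symmetric])
      qed
      also have "\<dots> = (\<Sum>k\<in>uminus ` F. (norm (cc hg k))\<^sup>2)"
        by (subst sum.reindex) (auto simp: inj_on_def)
      also have "\<dots> \<le> (LINT x|?M. (norm (hg x))\<^sup>2)"
        by (rule bessel[OF hgm hgb]) (use F in auto)
      also have "\<dots> = G" by (simp add: G_def hg_def)
      finally show ?thesis .
    qed
    show "(\<Sum>j\<in>F. norm (Kh j) powr (4/3)) \<le> Btot"
      unfolding Btot_def Kh_def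
      by (rule finite_sum_le_infsum) (use summ F in \<open>auto simp: lp_summable_def\<close>)
  qed auto
  have "complex_of_real (LINT x|?M. f x * K x) = (LINT x|?M. complex_of_real (f x * K x))"
    by (rule integral_complex_of_real[symmetric])
  also have "\<dots> = (LINT x|?M. complex_of_real (f x) * hK x)"
    by (simp add: hK_def)
  also have "\<dots> = (LINT x|?M. complex_of_real (f x) * (hK x - P x)) + (LINT x|?M. complex_of_real (f x) * P x)"
  proof -
    have i3: "integrable ?M (\<lambda>x. complex_of_real (f x) * P x)"
      unfolding P_def sum_distrib_left using ifee by (auto simp: mult.left_commute)
    have i4: "integrable ?M (\<lambda>x. complex_of_real (f x) * (hK x - P x))"
    proof (rule Bochner_Integration.integrable_bound)
      show "integrable ?M (\<lambda>x. (BK + CP) * f x)" using f_int[OF pdf] by simp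
      show "(\<lambda>x. complex_of_real (f x) * (hK x - P x)) \<in> borel_measurable ?M" by measurable
      show "AE x in ?M. norm (complex_of_real (f x) * (hK x - P x)) \<le> norm ((BK + CP) * f x)"
      proof (intro AE_I2)
        fix x
        have "norm (hK x - P x) \<le> BK + CP" using hKb[of x] Pb[of x] norm_triangle_ineq4[of "hK x" "P x"] by linarith
        then have "\<bar>f x\<bar> * norm (hK x - P x) \<le> \<bar>f x\<bar> * (BK + CP)" by (intro mult_left_mono) auto
        then show "norm (complex_of_real (f x) * (hK x - P x)) \<le> norm ((BK + CP) * f x)"
          using BKCP by (simp add: norm_mult abs_mult mult.commute)
      qed
    qed
    show ?thesis
      using Bochner_Integration.integral_add[OF i4 i3] by (simp add: algebra_simps)
  qed
  finally have eq: "complex_of_real (LINT x|?M. f x * K x) = (LINT x|?M. complex_of_real (f x) * (hK x - P x)) + (\<Sum>j\<in>F. Kh j * fh (-j))"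
    unfolding T1 .
  have "(LINT x|?M. f x * K x) = Re (complex_of_real (LINT x|?M. f x * K x))" by simp
  also have "\<dots> = Re (LINT x|?M. complex_of_real (f x) * (hK x - P x)) + Re (\<Sum>j\<in>F. Kh j * fh (-j))"
    unfolding eq by simp
  also have "\<dots> \<le> norm (LINT x|?M. complex_of_real (f x) * (hK x - P x)) + (\<Sum>j\<in>F. norm (fh (-j)) * norm (Kh j))"
  proof (rule add_mono)
    show "Re (LINT x|?M. complex_of_real (f x) * (hK x - P x)) \<le> norm (LINT x|?M. complex_of_real (f x) * (hK x - P x))"
      by (rule complex_Re_le_cmod)
    have "Re (\<Sum>j\<in>F. Kh j * fh (-j)) \<le> norm (\<Sum>j\<in>F. Kh j * fh (-j))" by (rule complex_Re_le_cmod)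
    also have "\<dots> \<le> (\<Sum>j\<in>F. norm (Kh j * fh (-j)))" by (rule norm_sum)
    finally show "Re (\<Sum>j\<in>F. Kh j * fh (-j)) \<le> (\<Sum>j\<in>F. norm (fh (-j)) * norm (Kh j))"
      by (simp add: norm_mult mult.commute)
  qed
  also have "\<dots> \<le> (e * N2 f + e) / 2 + G powr (1/4) * Btot powr (3/4)"
    by (rule add_mono[OF T2 H])
  finally show ?thesis by (simp add: G_def g_def Btot_def algebra_simps add_divide_distrib)
qed

theorem proposition2p7:
  fixes K f :: "real \<Rightarrow> real"
  assumes "continuous_on UNIV K" and "periodic1 K"
    and "\<And>x. x \<in> {-1/4..1/4} \<Longrightarrow> K x \<ge> 1"
    and "is_pdf f" and "supported_quarter f"
  shows "tLinf_norm (tconv f f) \<ge> ereal ((tLp_norm 2 (tconv f f))\<^sup>2)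
         \<and> (lp_summable (4/3) (fourier_coeff K) \<longrightarrow>
              (tLp_norm 2 (tconv f f))\<^sup>2 \<ge> (lp_norm (4/3) (fourier_coeff K)) powr (-4))"
proof -
  note contK = assms(1) and perK = assms(2) and K1 = assms(3) and pdf = assms(4) and supp = assms(5)
  let ?M = "lebesgue_on {0..1::real}"
  define g where "g = tconv f f"
  define G where "G = (LINT x|?M. (g x)\<^sup>2)"
  note g_borel[OF pdf, measurable]
  have gm[measurable]: "g \<in> borel_measurable ?M" unfolding g_def by (rule bm_M) measurable
  have gb: "\<bar>g x\<bar> \<le> N2 f" for x unfolding g_def by (rule g_bound[OF pdf])
  have g0: "0 \<le> g x" for x unfolding g_def by (rule g_nonneg[OF pdf])
  have gint: "integrable ?M g" by (rule int_bounded_M[OF gm, of "N2 f"]) (simp add: gb)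
  have g2int: "integrable ?M (\<lambda>x. (g x)\<^sup>2)"
  proof (rule int_bounded_M[of _ "(N2 f)\<^sup>2"])
    show "(\<lambda>x. (g x)\<^sup>2) \<in> borel_measurable ?M" by measurable
    show "norm ((g x)\<^sup>2) \<le> (N2 f)\<^sup>2" for x using power_mono[OF gb[of x], of 2] by simp
  qed
  have g1: "(LINT x|?M. g x) = 1" unfolding g_def by (rule g_int1[OF pdf])
  have G0: "0 \<le> G" unfolding G_def by (intro integral_nonneg_AE) simp
  have Geq: "(tLp_norm 2 (tconv f f))\<^sup>2 = G"
  proof -
    have "(\<lambda>x. \<bar>g x\<bar> powr 2) = (\<lambda>x. (g x)\<^sup>2)" by (simp add: fun_eq_iff)
    then have "tLp_norm 2 (tconv f f) = G powr (1/2)" by (simp add: tLp_norm_def G_def g_def)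
    then show ?thesis using G0 by (simp add: powr_half_sqrt)
  qed
  have part1: "ereal G \<le> tLinf_norm g"
  proof -
    define S where "S = esssup ?M (\<lambda>x. ereal \<bar>g x\<bar>)"
    have ae: "AE x in ?M. ereal \<bar>g x\<bar> \<le> S" unfolding S_def by (rule esssup_AE)
    have TS: "tLinf_norm g = S" by (simp add: tLinf_norm_def S_def)
    have "ereal G \<le> S"
    proof (cases S)
      case (real s)
      have ae2: "AE x in ?M. (g x)\<^sup>2 \<le> s * g x"
        using ae
      proof eventually_elim
        case (elim x)
        then have "g x \<le> s" using real g0[of x] by simp
        then have "g x * g x \<le> s * g x" using g0[of x] by (intro mult_right_mono) auto
        then show ?case by (simp add: power2_eq_square)
      qed
      have "G \<le> (LINT x|?M. s * g x)" unfolding G_def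
        by (rule integral_mono_AE[OF g2int _ ae2]) (simp add: gint)
      also have "\<dots> = s" using g1 by simp
      finally show ?thesis using real by simp
    next
      case PInf then show ?thesis by simp
    next
      case MInf
      have "AE x in ?M. g x = 0" using ae by eventually_elim (simp add: MInf)
      then have "(LINT x|?M. g x) = (LINT x|?M. 0)" by (intro integral_cong_AE) auto
      then show ?thesis using g1 by simp
    qed
    then show ?thesis using TS by simp
  qed
  have part2: "(lp_norm (4/3) (fourier_coeff K)) powr (-4) \<le> G"
    if summ: "lp_summable (4/3) (fourier_coeff K)"
  proof -
    define Btot where "Btot = infsum (\<lambda>j. norm (fourier_coeff K j) powr (4/3)) UNIV"
    define X where "X = G powr (1/4) * Btot powr (3/4)"
    have le1: "1 \<le> (LINT x|?M. f x * K x)" by (rule int_ge1(1)[OF contK perK K1 pdf supp])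
    have N20: "0 \<le> N2 f" unfolding N2_def[OF pdf] by (intro integral_nonneg_AE) simp
    have X1: "1 \<le> X"
    proof (rule ccontr)
      assume "\<not> 1 \<le> X"
      then have X: "X < 1" by simp
      define e where "e = (1 - X) / (N2 f + 1)"
      have e: "0 < e" using X N20 by (simp add: e_def)
      have "1 \<le> X + e * (N2 f + 1) / 2"
        using le1 eps_step[OF contK perK pdf summ e] by (simp add: X_def G_def g_def Btot_def)
      also have "e * (N2 f + 1) = 1 - X" using N20 by (simp add: e_def)
      finally have "1 \<le> X + (1 - X) / 2" .
      then have "2 \<le> 2 * X + (1 - X)" by (simp add: field_simps)
      then show False using X by linarith
    qed
    have L: "lp_norm (4/3) (fourier_coeff K) = Btot powr (3/4)" by (simp add: lp_norm_def Btot_def)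
    define Lq where "Lq = Btot powr (3/4)"
    have Lq0: "0 < Lq"
    proof -
      have "Lq \<noteq> 0" using X1 by (auto simp: X_def Lq_def)
      then show ?thesis by (simp add: Lq_def)
    qed
    have "1 / Lq \<le> G powr (1/4)" using X1 Lq0 by (simp add: X_def Lq_def[symmetric] field_simps)
    then have "(1 / Lq) powr 4 \<le> (G powr (1/4)) powr 4" using Lq0 by (intro powr_mono2) auto
    also have "(G powr (1/4)) powr 4 = G" using G0 by (simp add: powr_powr)
    finally have "(1 / Lq) powr 4 \<le> G" .
    moreover have "Lq powr (-4) = (1 / Lq) powr 4" using Lq0 by (simp add: powr_minus powr_divide divide_inverse power_inverse)
    ultimately show ?thesis by (simp add: L Lq_def)
  qed
  show ?thesis using part1 part2 Geq by (simp add: g_def)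
qed

end
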